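(* (1) There exist a hedonic diversity game in which all agents have strict preferences and an initial partition $\pi_0$ such that no finite sequence of IS deviations starting from $\pi_0$ ends in an individually stable partition. (2) The same holds for some hedonic diversity game in which all agents have naturally single-peaked preferences (with indifferences allowed) and some initial partition.
   Context: A hedonic diversity game (HDG) has agent set $N=R\cup B$ partitioned into red agents $R$ and blue agents $B$, $|N|=n$. Each agent $i$ has a weak order $\succsim_i^F$ over fractions $\{p/q: p\in\{0,\dots,|R|\},q\in[n]\}$, and evaluates a coalition $C\ni i$ by the fraction $|R\cap C|/|C|$. Strict: the orders are linear. Naturally single-peaked: for each agent $i$ and fractions $x,y,z$ with $x>y>z$ or $z>y>x$, $x\succ_i^F y$ implies $y\succsim_i^F z$. An IS deviation of agent $i$ from partition $\pi$ to $\pi'$ is a move of $i$ alone from $\pi(i)$ into another coalition of $\pi$ or into a new singleton such that $\pi'(i)\succ_i\pi(i)$ and $\pi'(j)\succsim_j\pi(j)$ for all $j\in\pi'(i)\setminus\{i\}$. A partition is individually stable (IS) if no IS deviation is possible from it. *)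

theory Defs
  imports Complex_Main
begin

text \<open>A hedonic diversity game is given by a finite nonempty agent set N, the red agents
  R \<subseteq> N (blue agents are N - R), and for each agent i a weak order pr i over fractions:
  pr i x y means x is weakly preferred to y by agent i.\<close>

definition fractions :: "'a set \<Rightarrow> 'a set \<Rightarrow> rat set" where
  "fractions N R = {of_nat p / of_nat q | p q. p \<le> card R \<and> 1 \<le> q \<and> q \<le> card N}"

definition frac :: "'a set \<Rightarrow> 'a set \<Rightarrow> rat" where
  "frac R C = of_nat (card (R \<inter> C)) / of_nat (card C)"

definition strict_pref :: "('a \<Rightarrow> rat \<Rightarrow> rat \<Rightarrow> bool) \<Rightarrow> 'a \<Rightarrow> rat \<Rightarrow> rat \<Rightarrow> bool" where
  "strict_pref pr i x y \<longleftrightarrow> pr i x y \<and> \<not> pr i y x"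

definition weak_order_on :: "rat set \<Rightarrow> (rat \<Rightarrow> rat \<Rightarrow> bool) \<Rightarrow> bool" where
  "weak_order_on F r \<longleftrightarrow>
     (\<forall>x\<in>F. \<forall>y\<in>F. r x y \<or> r y x) \<and>
     (\<forall>x\<in>F. \<forall>y\<in>F. \<forall>z\<in>F. r x y \<longrightarrow> r y z \<longrightarrow> r x z)"

definition hdg :: "'a set \<Rightarrow> 'a set \<Rightarrow> ('a \<Rightarrow> rat \<Rightarrow> rat \<Rightarrow> bool) \<Rightarrow> bool" where
  "hdg N R pr \<longleftrightarrow> finite N \<and> N \<noteq> {} \<and> R \<subseteq> N \<and>
     (\<forall>i\<in>N. weak_order_on (fractions N R) (pr i))"

definition strict_prefs :: "'a set \<Rightarrow> 'a set \<Rightarrow> ('a \<Rightarrow> rat \<Rightarrow> rat \<Rightarrow> bool) \<Rightarrow> bool" where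
  "strict_prefs N R pr \<longleftrightarrow>
     (\<forall>i\<in>N. \<forall>x\<in>fractions N R. \<forall>y\<in>fractions N R. pr i x y \<and> pr i y x \<longrightarrow> x = y)"

definition naturally_single_peaked :: "'a set \<Rightarrow> 'a set \<Rightarrow> ('a \<Rightarrow> rat \<Rightarrow> rat \<Rightarrow> bool) \<Rightarrow> bool" where
  "naturally_single_peaked N R pr \<longleftrightarrow>
     (\<forall>i\<in>N. \<forall>x\<in>fractions N R. \<forall>y\<in>fractions N R. \<forall>z\<in>fractions N R.
        ((x > y \<and> y > z) \<or> (z > y \<and> y > x)) \<longrightarrow> strict_pref pr i x y \<longrightarrow> pr i y z)"

definition is_partition :: "'a set \<Rightarrow> 'a set set \<Rightarrow> bool" where
  "is_partition N \<pi> \<longleftrightarrow> (\<forall>C\<in>\<pi>. C \<noteq> {}) \<and> \<Union>\<pi> = N \<and>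
     (\<forall>C\<in>\<pi>. \<forall>D\<in>\<pi>. C \<noteq> D \<longrightarrow> C \<inter> D = {})"

text \<open>An IS deviation: agent i leaves its coalition C and joins T (a coalition of the
  partition other than C, or the empty set = a new singleton).\<close>
definition IS_dev :: "'a set \<Rightarrow> 'a set \<Rightarrow> ('a \<Rightarrow> rat \<Rightarrow> rat \<Rightarrow> bool) \<Rightarrow> 'a set set \<Rightarrow> 'a set set \<Rightarrow> bool" where
  "IS_dev N R pr \<pi> \<pi>' \<longleftrightarrow> is_partition N \<pi> \<and>
     (\<exists>i C T. C \<in> \<pi> \<and> i \<in> C \<and> (T \<in> \<pi> \<or> T = {}) \<and> T \<noteq> C \<and>
        \<pi>' = (\<pi> - {C, T}) \<union> (if C - {i} = {} then {} else {C - {i}}) \<union> {insert i T} \<and>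
        strict_pref pr i (frac R (insert i T)) (frac R C) \<and>
        (\<forall>j\<in>T. pr j (frac R (insert i T)) (frac R T)))"

definition individually_stable :: "'a set \<Rightarrow> 'a set \<Rightarrow> ('a \<Rightarrow> rat \<Rightarrow> rat \<Rightarrow> bool) \<Rightarrow> 'a set set \<Rightarrow> bool" where
  "individually_stable N R pr \<pi> \<longleftrightarrow> is_partition N \<pi> \<and> \<not> (\<exists>\<pi>'. IS_dev N R pr \<pi> \<pi>')"

end

theory Submission
  imports Defs
begin

definition devs :: "'a set \<Rightarrow> ('a \<Rightarrow> rat \<Rightarrow> rat \<Rightarrow> bool) \<Rightarrow> 'a set set \<Rightarrow> 'a set set set" where
  "devs R pr \<pi> = (\<Union>C\<in>\<pi>. \<Union>i\<in>C. \<Union>T\<in>insert {} \<pi>.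
     (if T \<noteq> C \<and> strict_pref pr i (frac R (insert i T)) (frac R C) \<and>
         (\<forall>j\<in>T. pr j (frac R (insert i T)) (frac R T))
      then {(\<pi> - {C, T}) \<union> (if C - {i} = {} then {} else {C - {i}}) \<union> {insert i T}} else {}))"

lemma IS_dev_devs: "IS_dev N R pr \<pi> \<pi>' \<longleftrightarrow> is_partition N \<pi> \<and> \<pi>' \<in> devs R pr \<pi>"
  unfolding IS_dev_def devs_def by (auto split: if_splits)

lemma closed_no_IS:
  assumes H: "\<forall>\<pi>\<in>S. is_partition N \<pi> \<and> devs R pr \<pi> \<noteq> {} \<and> devs R pr \<pi> \<subseteq> S" and "\<pi>0 \<in> S"
  shows "\<forall>\<pi>. (IS_dev N R pr)\<^sup>*\<^sup>* \<pi>0 \<pi> \<longrightarrow> \<not> individually_stable N R pr \<pi>"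
proof (intro allI impI)
  fix \<pi> assume "(IS_dev N R pr)\<^sup>*\<^sup>* \<pi>0 \<pi>"
  then have "\<pi> \<in> S"
  proof induction
    case base then show ?case using assms(2) .
  next
    case (step y z) then show ?case using H by (auto simp: IS_dev_devs)
  qed
  then show "\<not> individually_stable N R pr \<pi>" using H
    unfolding individually_stable_def IS_dev_devs by blast
qed

lemma fractions_eq: "fractions N R = (\<lambda>(p,q). of_nat p / of_nat q) ` ({0..card R} \<times> {1..card N})"
  unfolding fractions_def image_def by force

definition rk :: "rat list list \<Rightarrow> rat \<Rightarrow> nat" where
  "rk L x = length (takeWhile (\<lambda>c. x \<notin> set c) L)"

lemma weak_rk: "weak_order_on F (\<lambda>x y. rk L x \<le> rk L y)"
  unfolding weak_order_on_def by auto

definition L1 :: "nat \<Rightarrow> rat list list" where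
  "L1 i = (if i = 0 then [[3/7], [3/5], [3/4], [2/5], [1/4], [1/5], [1/3], [2/3], [1/6], [1/2], [1], [0], [3], [2], [3/2], [1/7], [2/7]]
    else if i = 1 then [[3/5], [1/5], [3/4], [1/3], [2/7], [1/4], [2/3], [1/2], [3], [3/7], [1], [3/2], [1/6], [1/7], [2/5], [2], [0]]
    else if i = 2 then [[3/7], [3/2], [1/6], [0], [2/7], [3/5], [2/5], [1/5], [1/4], [1/3], [1/7], [1/2], [1], [2/3], [2], [3/4], [3]]
    else if i = 3 then [[2], [3/7], [3/5], [1/6], [3/4], [3/2], [2/3], [1/5], [1/4], [0], [1/7], [2/5], [1], [1/2], [1/3], [2/7], [3]]
    else if i = 4 then [[1/6], [3/7], [3/4], [3], [2/5], [1/5], [1/7], [1/4], [1/2], [3/2], [1], [2/3], [1/3], [0], [2], [3/5], [2/7]]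
    else if i = 5 then [[3/7], [2/7], [3/4], [2], [3/2], [1/5], [2/5], [2/3], [1/4], [3/5], [1/2], [1/3], [1], [1/7], [3], [1/6], [0]]
    else [[1/7], [1], [2/7], [1/6], [1/3], [1/5], [2/3], [1/2], [3/5], [3/2], [2/5], [2], [3/7], [1/4], [3/4], [0], [3]])"

definition S1 :: "nat set set set" where
  "S1 = {{{0, 1}, {2, 3, 4, 5, 6}}, {{0, 2, 4, 5, 6}, {1, 3}}, {{0, 1, 3}, {2, 4, 5, 6}}, {{0, 2, 4, 5, 6}, {1}, {3}}, {{0, 4, 5, 6}, {1, 2}, {3}}, {{0, 1, 6}, {2, 3, 4, 5}}, {{0, 1, 6}, {2, 4, 5}, {3}}, {{0, 2, 4, 5}, {1, 6}, {3}}}"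

definition L2 :: "nat \<Rightarrow> rat list list" where
  "L2 i = (if i = 0 then [[1/3], [2/5, 3/7, 1/2, 3/5, 2/3, 3/4], [1/5, 1/4, 2/7, 1], [1/6], [1/7], [3/2], [2], [0], [3]]
    else if i = 1 then [[3/5], [2/3, 3/4], [2/7, 1/3, 2/5, 3/7, 1/2], [1/4], [1], [1/5], [3/2], [2], [3], [1/6], [1/7], [0]]
    else if i = 2 then [[2/5], [3/7, 1/2], [3/5, 2/3], [2/7, 1/3, 3/4], [1/5, 1/4, 1], [3/2], [2], [1/6], [1/7], [3], [0]]
    else if i = 3 then [[3/5], [0, 1/7, 1/6, 1/5, 1/4, 2/7, 1/3, 2/5, 3/7, 1/2, 2/3, 3/4], [1], [3/2], [2], [3]]
    else if i = 4 then [[1/5, 1/4, 2/7], [1/3], [0, 1/7, 1/6, 2/5, 3/7, 1/2, 3/5, 2/3], [3/4], [1], [3/2], [2], [3]]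
    else if i = 5 then [[3/5, 2/3, 3/4], [0, 1/7, 1/6, 1/5, 1/4, 2/7, 1/3, 2/5, 3/7, 1/2], [1], [3/2], [2], [3]]
    else [[2/5, 3/7], [2/7, 1/3], [0, 1/7, 1/6, 1/5, 1/4, 1/2, 3/5, 2/3, 3/4], [1], [3/2], [2], [3]])"

definition S2 :: "nat set set set" where
  "S2 = {{{0, 1}, {2, 3, 4, 5, 6}}, {{0, 4}, {1, 2, 3, 5, 6}}, {{0, 1, 4}, {2, 3, 5, 6}}, {{0, 2, 4}, {1, 3, 5, 6}}, {{0, 1, 5}, {2, 3, 4, 6}}, {{0, 1, 2, 5}, {3, 4, 6}}, {{0, 4, 6}, {1, 2, 3, 5}}, {{0, 1, 2, 3, 5}, {4, 6}}}"

definition pr1 :: "nat \<Rightarrow> rat \<Rightarrow> rat \<Rightarrow> bool" where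
  "pr1 i x y = (rk (L1 i) x \<le> rk (L1 i) y)"

definition pr2 :: "nat \<Rightarrow> rat \<Rightarrow> rat \<Rightarrow> bool" where
  "pr2 i x y = (rk (L2 i) x \<le> rk (L2 i) y)"

lemma card7: "card {0::nat,1,2,3,4,5,6} = 7" by simp
lemma card3: "card {0::nat,1,2} = 3" by simp

lemma hdg1: "hdg {0,1,2,3,4,5,6} {0,1,2} pr1"
  unfolding hdg_def pr1_def using weak_rk by auto

lemma cl1: "\<forall>\<pi>\<in>S1. is_partition {0,1,2,3,4,5,6} \<pi> \<and> devs {0,1,2} pr1 \<pi> \<noteq> {} \<and> devs {0,1,2} pr1 \<pi> \<subseteq> S1"
  unfolding S1_def devs_def pr1_def is_partition_def frac_def strict_pref_def
  by code_simp

lemma hdg2: "hdg {0,1,2,3,4,5,6} {0,1,2} pr2"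
  unfolding hdg_def pr2_def using weak_rk by auto

lemma cl2: "\<forall>\<pi>\<in>S2. is_partition {0,1,2,3,4,5,6} \<pi> \<and> devs {0,1,2} pr2 \<pi> \<noteq> {} \<and> devs {0,1,2} pr2 \<pi> \<subseteq> S2"
  unfolding S2_def devs_def pr2_def is_partition_def frac_def strict_pref_def
  by code_simp

definition FR :: "rat list" where
  "FR = [0, 1/7, 1/6, 1/5, 1/4, 2/7, 1/3, 2/5, 3/7, 1/2, 3/5, 2/3, 3/4, 1, 3/2, 2, 3]"

definition V1 :: "nat \<Rightarrow> nat list" where
  "V1 i = (if i = 0 then [11, 15, 8, 5, 4, 16, 6, 3, 0, 9, 1, 7, 2, 10, 14, 13, 12]
    else if i = 1 then [16, 13, 12, 1, 5, 4, 3, 14, 9, 7, 0, 6, 2, 10, 11, 15, 8]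
    else if i = 2 then [3, 10, 2, 7, 8, 4, 9, 6, 0, 11, 5, 13, 15, 12, 1, 14, 16]
    else if i = 3 then [9, 10, 3, 7, 8, 15, 14, 11, 1, 13, 2, 6, 4, 12, 5, 0, 16]
    else if i = 4 then [13, 6, 0, 5, 7, 16, 12, 4, 1, 8, 15, 11, 2, 10, 9, 14, 3]
    else if i = 5 then [16, 13, 15, 5, 8, 1, 11, 6, 0, 10, 9, 7, 2, 12, 4, 3, 14]
    else [15, 0, 3, 5, 13, 2, 4, 10, 12, 7, 8, 6, 14, 1, 9, 11, 16])"

definition V2 :: "nat \<Rightarrow> nat list" where
  "V2 i = (if i = 0 then [7, 4, 3, 2, 2, 2, 0, 1, 1, 1, 1, 1, 1, 2, 5, 6, 8]
    else if i = 1 then [11, 10, 9, 5, 3, 2, 2, 2, 2, 2, 0, 1, 1, 4, 6, 7, 8]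
    else if i = 2 then [10, 8, 7, 4, 4, 3, 3, 0, 1, 1, 2, 2, 3, 4, 5, 6, 9]
    else if i = 3 then [1, 1, 1, 1, 1, 1, 1, 1, 1, 1, 0, 1, 1, 2, 3, 4, 5]
    else if i = 4 then [2, 2, 2, 0, 0, 0, 1, 2, 2, 2, 2, 2, 3, 4, 5, 6, 7]
    else if i = 5 then [1, 1, 1, 1, 1, 1, 1, 1, 1, 1, 0, 0, 0, 2, 3, 4, 5]
    else [2, 2, 2, 2, 2, 1, 1, 0, 0, 2, 2, 2, 2, 3, 4, 5, 6])"


lemma FR_sorted: "sorted_wrt (<) FR" unfolding FR_def by code_simp
lemma len_FR: "length FR = 17" by (simp add: FR_def)

lemma frac_sub: "fractions {0,1,2,3,4,5,6} {0::nat,1,2} \<subseteq> set FR"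
  unfolding fractions_eq card7 card3 FR_def by code_simp

lemma V1_eq: "i \<in> {0,1,2,3,4,5,6} \<Longrightarrow> map (rk (L1 i)) FR = V1 i"
proof -
  have "\<forall>i\<in>{0,1,2,3,4,5,6::nat}. map (rk (L1 i)) FR = V1 i"
    unfolding L1_def V1_def FR_def rk_def by code_simp
  then show "i \<in> {0,1,2,3,4,5,6} \<Longrightarrow> map (rk (L1 i)) FR = V1 i" by blast
qed

lemma V2_eq: "i \<in> {0,1,2,3,4,5,6} \<Longrightarrow> map (rk (L2 i)) FR = V2 i"
proof -
  have "\<forall>i\<in>{0,1,2,3,4,5,6::nat}. map (rk (L2 i)) FR = V2 i"
    unfolding L2_def V2_def FR_def rk_def by code_simp
  then show "i \<in> {0,1,2,3,4,5,6} \<Longrightarrow> map (rk (L2 i)) FR = V2 i" by blast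
qed

lemma V1_ok: "\<forall>i\<in>{0,1,2,3,4,5,6::nat}. distinct (V1 i) \<and> length (V1 i) = 17"
  unfolding V1_def by code_simp

definition sp_ok :: "nat list \<Rightarrow> bool" where
  "sp_ok v = (\<forall>b\<in>set [0..<length v]. (\<forall>x\<in>set (take b v). v!b \<le> x) \<or> (\<forall>x\<in>set (drop (Suc b) v). v!b \<le> x))"

lemma sp_okD: assumes "sp_ok v" "a < b" "b < c" "c < length v"
  shows "(v!a < v!b \<longrightarrow> v!b \<le> v!c) \<and> (v!c < v!b \<longrightarrow> v!b \<le> v!a)"
proof -
  have A: "v!a \<in> set (take b v)" unfolding in_set_conv_nth
    using assms by (intro exI[of _ a]) auto
  have C: "v!c \<in> set (drop (Suc b) v)" unfolding in_set_conv_nth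
    using assms by (intro exI[of _ "c - Suc b"]) auto
  have "b \<in> set [0..<length v]" using assms by auto
  then have "(\<forall>x\<in>set (take b v). v!b \<le> x) \<or> (\<forall>x\<in>set (drop (Suc b) v). v!b \<le> x)"
    using assms(1) unfolding sp_ok_def by blast
  then show ?thesis using A C by auto
qed

lemma V2_ok: "i \<in> {0,1,2,3,4,5,6} \<Longrightarrow> sp_ok (V2 i) \<and> length (V2 i) = 17"
  by (auto simp: V2_def; code_simp)

lemma FR_idx: "x \<in> fractions {0,1,2,3,4,5,6} {0::nat,1,2} \<Longrightarrow> \<exists>a<17. x = FR ! a"
proof -
  assume "x \<in> fractions {0,1,2,3,4,5,6} {0::nat,1,2}"
  then have "x \<in> set FR" using frac_sub by blast
  then obtain a where "a < length FR" "FR ! a = x" unfolding in_set_conv_nth by blast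
  then show ?thesis using len_FR by auto
qed

lemma idx_less: assumes "a < 17" "b < 17" "FR ! a < FR ! b" shows "a < b"
proof (rule ccontr)
  assume "\<not> a < b"
  then have "b < a \<or> b = a" by auto
  then show False
  proof
    assume "b < a"
    moreover have "a < length FR" using assms(1) len_FR by simp
    ultimately have "FR ! b < FR ! a" by (rule sorted_wrt_nth_less[OF FR_sorted])
    then show False using assms(3) by simp
  next
    assume "b = a" then show False using assms(3) by simp
  qed
qed

lemma strict1: "strict_prefs {0,1,2,3,4,5,6} {0::nat,1,2} pr1"
  unfolding strict_prefs_def
proof (intro ballI impI)
  fix i x y
  assume i: "i \<in> {0::nat,1,2,3,4,5,6}" and x: "x \<in> fractions {0,1,2,3,4,5,6} {0::nat,1,2}"
    and y: "y \<in> fractions {0,1,2,3,4,5,6} {0::nat,1,2}" and p: "pr1 i x y \<and> pr1 i y x"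
  obtain a where a: "a < 17" "x = FR ! a" using FR_idx[OF x] by blast
  obtain b where b: "b < 17" "y = FR ! b" using FR_idx[OF y] by blast
  have V: "map (rk (L1 i)) FR = V1 i" using V1_eq i by blast
  have ra: "rk (L1 i) x = V1 i ! a" using V a len_FR by (metis nth_map)
  have rb: "rk (L1 i) y = V1 i ! b" using V b len_FR by (metis nth_map)
  have e: "V1 i ! a = V1 i ! b" using p ra rb unfolding pr1_def by simp
  have "distinct (V1 i)" "length (V1 i) = 17" using V1_ok i by blast+
  then have "a = b" using nth_eq_iff_index_eq[of "V1 i" a b] e a(1) b(1) by simp
  then show "x = y" using a b by simp
qed

lemma nsp2: "naturally_single_peaked {0,1,2,3,4,5,6} {0::nat,1,2} pr2"
  unfolding naturally_single_peaked_def
proof (intro ballI impI)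
  fix i x y z
  assume i: "i \<in> {0::nat,1,2,3,4,5,6}" and x: "x \<in> fractions {0,1,2,3,4,5,6} {0::nat,1,2}"
    and y: "y \<in> fractions {0,1,2,3,4,5,6} {0::nat,1,2}"
    and z: "z \<in> fractions {0,1,2,3,4,5,6} {0::nat,1,2}"
    and ord: "x > y \<and> y > z \<or> z > y \<and> y > x" and sp: "strict_pref pr2 i x y"
  obtain a where a: "a < 17" "x = FR ! a" using FR_idx[OF x] by blast
  obtain b where b: "b < 17" "y = FR ! b" using FR_idx[OF y] by blast
  obtain c where c: "c < 17" "z = FR ! c" using FR_idx[OF z] by blast
  have V: "map (rk (L2 i)) FR = V2 i" using V2_eq i by blast
  have ra: "rk (L2 i) x = V2 i ! a" using V a len_FR by (metis nth_map)
  have rb: "rk (L2 i) y = V2 i ! b" using V b len_FR by (metis nth_map)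
  have rc: "rk (L2 i) z = V2 i ! c" using V c len_FR by (metis nth_map)
  have lt: "V2 i ! a < V2 i ! b" using sp ra rb unfolding strict_pref_def pr2_def by simp
  have ok: "sp_ok (V2 i)" "length (V2 i) = 17" using V2_ok i by blast+
  from ord show "pr2 i y z"
  proof
    assume "x > y \<and> y > z"
    then have "FR ! b < FR ! a" "FR ! c < FR ! b" using a(2) b(2) c(2) by simp_all
    then have ba: "b < a" and cb: "c < b" using idx_less a(1) b(1) c(1) by blast+
    have "a < length (V2 i)" using ok(2) a(1) by simp
    then have "V2 i ! b \<le> V2 i ! c" using sp_okD[OF ok(1) cb ba] lt by blast
    then show ?thesis unfolding pr2_def using rb rc by simp
  next
    assume "z > y \<and> y > x"
    then have "FR ! a < FR ! b" "FR ! b < FR ! c" using a(2) b(2) c(2) by simp_all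
    then have ab: "a < b" and bc: "b < c" using idx_less a(1) b(1) c(1) by blast+
    have "c < length (V2 i)" using ok(2) c(1) by simp
    then have "V2 i ! b \<le> V2 i ! c" using sp_okD[OF ok(1) ab bc] lt by blast
    then show ?thesis unfolding pr2_def using rb rc by simp
  qed
qed

theorem proposition4p3:
  shows "(\<exists>(N::nat set) R pr \<pi>0. hdg N R pr \<and> strict_prefs N R pr \<and> is_partition N \<pi>0 \<and>
            (\<forall>\<pi>. (IS_dev N R pr)\<^sup>*\<^sup>* \<pi>0 \<pi> \<longrightarrow> \<not> individually_stable N R pr \<pi>))
       \<and> (\<exists>(N::nat set) R pr \<pi>0. hdg N R pr \<and> naturally_single_peaked N R pr \<and> is_partition N \<pi>0 \<and>
            (\<forall>\<pi>. (IS_dev N R pr)\<^sup>*\<^sup>* \<pi>0 \<pi> \<longrightarrow> \<not> individually_stable N R pr \<pi>))"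
proof
  have m1: "{{0, 1}, {2, 3, 4, 5, 6}} \<in> S1" unfolding S1_def by simp
  show "\<exists>(N::nat set) R pr \<pi>0. hdg N R pr \<and> strict_prefs N R pr \<and> is_partition N \<pi>0 \<and>
            (\<forall>\<pi>. (IS_dev N R pr)\<^sup>*\<^sup>* \<pi>0 \<pi> \<longrightarrow> \<not> individually_stable N R pr \<pi>)"
    using hdg1 strict1 cl1 m1 closed_no_IS[OF cl1 m1] by blast
  have m2: "{{0, 1}, {2, 3, 4, 5, 6}} \<in> S2" unfolding S2_def by simp
  show "\<exists>(N::nat set) R pr \<pi>0. hdg N R pr \<and> naturally_single_peaked N R pr \<and> is_partition N \<pi>0 \<and>
            (\<forall>\<pi>. (IS_dev N R pr)\<^sup>*\<^sup>* \<pi>0 \<pi> \<longrightarrow> \<not> individually_stable N R pr \<pi>)"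
    using hdg2 nsp2 cl2 m2 closed_no_IS[OF cl2 m2] by blast
qed

end
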